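(* Let $D_1,\dots,D_k$ be $n\times n$ doubly stochastic matrices and $\delta_1,\dots,\delta_k$ positive real numbers, and let $S_k(D)=\delta_1D_1+\cdots+\delta_kD_k$. Then for every $m\in\mathbb{N}$ and every block structure $\mathbb{B}\subseteq M_n(\mathbb{C})$, $\mu_{\mathbb{B}}(S_k(D)^m)=(\delta_1+\cdots+\delta_k)^m$.
   Context: A doubly stochastic matrix is a real matrix with nonnegative entries whose row sums and column sums all equal $1$. $\|M\|_2$ denotes the spectral norm. A block structure is a set of the form $\mathbb{B}=\{\operatorname{diag}(\delta_1I_{k_1},\dots,\delta_rI_{k_r},\Delta_1,\dots,\Delta_s)\mid \delta_i\in\mathbb{C},\ \Delta_j\in M_{n_j}(\mathbb{C})\}\subseteq M_n(\mathbb{C})$ for some $r,s\in\mathbb{N}_0$ and positive integers $k_i,n_j$ with $\sum k_i+\sum n_j=n$. The structured singular value is $\mu_{\mathbb{B}}(M)=0$ if $\det(I+M\Delta)\neq0$ for all $\Delta\in\mathbb{B}$, and otherwise $\mu_{\mathbb{B}}(M)=\big(\min\{\|\Delta\|_2\mid \Delta\in\mathbb{B},\ \det(I+M\Delta)=0\}\big)^{-1}$. *)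

theory Defs
  imports "HOL-Analysis.Analysis"
begin

(* Matrices are indexed by a finite, linearly ordered type 'n with CARD('n) = n.
   The position of index i in {0..<n} is its rank in the order. *)

definition idx_pos :: "'n::{finite,linorder} \<Rightarrow> nat" where
  "idx_pos i = card {j. j < i}"

primrec matpow :: "'a::semiring_1 ^'n::finite^'n \<Rightarrow> nat \<Rightarrow> 'a^'n^'n" where
  "matpow A 0 = mat 1"
| "matpow A (Suc m) = A ** matpow A m"

definition doubly_stochastic :: "real^'n::finite^'n \<Rightarrow> bool" where
  "doubly_stochastic A \<longleftrightarrow>
     (\<forall>i j. A $ i $ j \<ge> 0) \<and>
     (\<forall>i. (\<Sum>j\<in>UNIV. A $ i $ j) = 1) \<and>
     (\<forall>j. (\<Sum>i\<in>UNIV. A $ i $ j) = 1)"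

definition spec_norm :: "complex^'n::finite^'n \<Rightarrow> real" where
  "spec_norm A = onorm (\<lambda>x. A *v x)"

(* index of the block containing position p, for consecutive blocks of the given sizes *)
definition block_of :: "nat list \<Rightarrow> nat \<Rightarrow> nat" where
  "block_of sizes p = (LEAST b. p < sum_list (take (Suc b) sizes))"

(* the set diag(delta_1 I_{k_1},...,delta_r I_{k_r}, Delta_1,...,Delta_s):
   ks = [k_1,...,k_r] (repeated scalar blocks), ns = [n_1,...,n_s] (full blocks) *)
definition block_set :: "nat list \<Rightarrow> nat list \<Rightarrow> ((complex, 'n::{finite,linorder}) vec, 'n) vec set" where
  "block_set ks ns =
     {D. let blk = (\<lambda>i. block_of (ks @ ns) (idx_pos i)) in
         (\<forall>i j. blk i \<noteq> blk j \<longrightarrow> D $ i $ j = 0) \<and>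
         (\<exists>d :: nat \<Rightarrow> complex. \<forall>i j. blk i = blk j \<and> blk i < length ks \<longrightarrow>
              D $ i $ j = (if i = j then d (blk i) else 0))}"

definition is_block_structure :: "((complex, 'n::{finite,linorder}) vec, 'n) vec set \<Rightarrow> bool" where
  "is_block_structure B \<longleftrightarrow>
     (\<exists>ks ns. (\<forall>k\<in>set ks. k > 0) \<and> (\<forall>k\<in>set ns. k > 0) \<and>
              sum_list ks + sum_list ns = CARD('n) \<and> B = block_set ks ns)"

(* structured singular value; the minimum is written as Inf (it is attained) *)
definition ssv :: "(complex^'n::finite^'n) set \<Rightarrow> complex^'n^'n \<Rightarrow> real" where
  "ssv B M =
     (if \<forall>D\<in>B. det (mat 1 + M ** D) \<noteq> 0 then 0
      else inverse (Inf {spec_norm D | D. D \<in> B \<and> det (mat 1 + M ** D) = 0}))"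

end

theory Submission
  imports Defs
begin

lemma normsq_vec: "(norm (x::complex^'n::finite))^2 = (\<Sum>i\<in>UNIV. (norm (x$i))^2)"
  unfolding norm_vec_def L2_set_def by (simp add: sum_nonneg)

lemma nonneg_mat_norm:
  fixes R :: "'n::finite \<Rightarrow> 'n \<Rightarrow> real" and x :: "complex^'n"
  assumes R0: "\<And>a b. R a b \<ge> 0" and rows: "\<And>a. (\<Sum>b\<in>UNIV. R a b) = s"
    and cols: "\<And>b. (\<Sum>a\<in>UNIV. R a b) = s"
  shows "norm ((\<chi> a b. complex_of_real (R a b)) *v x) \<le> s * norm x"
proof -
  let ?y = "(\<chi> a b. complex_of_real (R a b)) *v x"
  have s0: "s \<ge> 0" using rows[of undefined] R0 by (metis sum_nonneg)
  have ya: "norm (?y $ a) \<le> (\<Sum>b\<in>UNIV. R a b * norm (x$b))" for a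
  proof -
    have "norm (?y $ a) = norm (\<Sum>b\<in>UNIV. complex_of_real (R a b) * x$b)"
      by (simp add: matrix_vector_mult_def)
    also have "\<dots> \<le> (\<Sum>b\<in>UNIV. norm (complex_of_real (R a b) * x$b))" by (rule norm_sum)
    also have "\<dots> = (\<Sum>b\<in>UNIV. R a b * norm (x$b))"
      by (simp add: norm_mult R0)
    finally show ?thesis .
  qed
  have ya2: "(norm (?y $ a))^2 \<le> s * (\<Sum>b\<in>UNIV. R a b * (norm (x$b))^2)" for a
  proof -
    have "(norm (?y $ a))^2 \<le> (\<Sum>b\<in>UNIV. R a b * norm (x$b))^2"
      using ya[of a] by (simp add: power_mono)
    also have "\<dots> = (\<Sum>b\<in>UNIV. sqrt (R a b) * (sqrt (R a b) * norm (x$b)))^2"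
      by (rule arg_cong[where f="\<lambda>t. t^2"], rule sum.cong, simp, simp add: R0 real_sqrt_mult[symmetric])
    also have "\<dots> \<le> (\<Sum>b\<in>UNIV. (sqrt (R a b))^2) * (\<Sum>b\<in>UNIV. (sqrt (R a b) * norm (x$b))^2)"
      by (rule Cauchy_Schwarz_ineq_sum)
    also have "\<dots> = s * (\<Sum>b\<in>UNIV. R a b * (norm (x$b))^2)"
      by (simp add: R0 rows power_mult_distrib)
    finally show ?thesis .
  qed
  have "(norm ?y)^2 = (\<Sum>a\<in>UNIV. (norm (?y$a))^2)" by (rule normsq_vec)
  also have "\<dots> \<le> (\<Sum>a\<in>UNIV. s * (\<Sum>b\<in>UNIV. R a b * (norm (x$b))^2))"
    by (rule sum_mono) (rule ya2)
  also have "\<dots> = s * (\<Sum>b\<in>UNIV. (\<Sum>a\<in>UNIV. R a b) * (norm (x$b))^2)"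
    unfolding sum_distrib_left[symmetric] sum_distrib_right
    by (subst sum.swap) (simp add: mult.assoc)
  also have "\<dots> = (s * norm x)^2"
    by (simp add: cols normsq_vec power_mult_distrib sum_distrib_left power2_eq_square[of s] mult.assoc)
  finally have "(norm ?y)^2 \<le> (s * norm x)^2" .
  then show ?thesis by (rule power2_le_imp_le) (simp add: s0)
qed

lemma det_zero_iff:
  fixes A :: "complex^'n::finite^'n"
  shows "det A = 0 \<longleftrightarrow> (\<exists>x. x \<noteq> 0 \<and> A *v x = 0)"
  using invertible_det_nz[of A] invertible_left_inverse[of A] matrix_left_invertible_ker[of A]
  by blast

lemma norm_smult_vec: "norm ((c::complex) *s (x::complex^'n::finite)) = norm c * norm x"
proof -
  have "(norm (c *s x))^2 = (norm c * norm x)^2"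
    by (simp add: normsq_vec power_mult_distrib norm_mult sum_distrib_left)
  then show ?thesis by (simp add: power2_eq_iff_nonneg)
qed

theorem corollary2p2:
  fixes D :: "nat \<Rightarrow> ((real, 'n::{finite,linorder}) vec, 'n) vec"
    and \<delta> :: "nat \<Rightarrow> real"
    and k m :: nat
    and B :: "((complex, 'n) vec, 'n) vec set"
  assumes "k \<ge> 1"
    and "\<And>i. i < k \<Longrightarrow> doubly_stochastic (D i)"
    and "\<And>i. i < k \<Longrightarrow> \<delta> i > 0"
    and "is_block_structure B"
  shows "ssv B (matpow (\<chi> a b. complex_of_real (\<Sum>i<k. \<delta> i * D i $ a $ b)) m)
         = (\<Sum>i<k. \<delta> i) ^ m"
proof -
  define s where "s = (\<Sum>i<k. \<delta> i)"
  define R where "R = (\<lambda>a b. \<Sum>i<k. \<delta> i * D i $ a $ b)"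
  define S where "S = (\<chi> a b. complex_of_real (R a b))"
  define M where "M = matpow S m"
  have s0: "s > 0" unfolding s_def
    using assms(1,3) by (intro sum_pos) (auto simp: lessThan_empty_iff)
  have ds: "\<And>i. i < k \<Longrightarrow> (\<forall>a b. D i $ a $ b \<ge> 0) \<and> (\<forall>a. (\<Sum>b\<in>UNIV. D i $ a $ b) = 1)
      \<and> (\<forall>b. (\<Sum>a\<in>UNIV. D i $ a $ b) = 1)"
    using assms(2) unfolding doubly_stochastic_def by blast
  have R0: "R a b \<ge> 0" for a b unfolding R_def
    using ds assms(3) by (intro sum_nonneg) (simp add: less_imp_le)
  have rows: "(\<Sum>b\<in>UNIV. R a b) = s" for a
  proof -
    have "(\<Sum>b\<in>UNIV. R a b) = (\<Sum>i<k. \<delta> i * (\<Sum>b\<in>UNIV. D i $ a $ b))"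
      unfolding R_def by (subst sum.swap) (simp add: sum_distrib_left)
    also have "\<dots> = s" unfolding s_def using ds by (intro sum.cong) auto
    finally show ?thesis .
  qed
  have cols: "(\<Sum>a\<in>UNIV. R a b) = s" for b
  proof -
    have "(\<Sum>a\<in>UNIV. R a b) = (\<Sum>i<k. \<delta> i * (\<Sum>a\<in>UNIV. D i $ a $ b))"
      unfolding R_def by (subst sum.swap) (simp add: sum_distrib_left)
    also have "\<dots> = s" unfolding s_def using ds by (intro sum.cong) auto
    finally show ?thesis .
  qed
  have hS: "norm (S *v x) \<le> s * norm x" for x
    unfolding S_def by (rule nonneg_mat_norm[OF R0 rows cols])
  have hM: "norm (matpow S j *v x) \<le> s^j * norm x" for j x
  proof (induction j arbitrary: x)
    case 0
    then show ?case by simp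
  next
    case (Suc j)
    have "norm (matpow S (Suc j) *v x) = norm (S *v (matpow S j *v x))"
      by (simp add: matrix_vector_mul_assoc)
    also have "\<dots> \<le> s * norm (matpow S j *v x)" by (rule hS)
    also have "\<dots> \<le> s * (s^j * norm x)" using Suc s0 by simp
    finally show ?case by simp
  qed
  have S1: "S *v 1 = complex_of_real s *s 1"
  proof -
    have "(S *v 1) $ a = complex_of_real s" for a
    proof -
      have "(S *v 1) $ a = (\<Sum>b\<in>UNIV. complex_of_real (R a b))"
        unfolding S_def by (simp add: matrix_vector_mult_def)
      also have "\<dots> = complex_of_real (\<Sum>b\<in>UNIV. R a b)" by (rule of_real_sum[symmetric])
      also have "\<dots> = complex_of_real s" using rows[of a] by (rule arg_cong)
      finally show ?thesis .
    qed
    then show ?thesis by (simp add: vec_eq_iff)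
  qed
  have M1: "matpow S j *v 1 = complex_of_real (s^j) *s 1" for j
  proof (induction j)
    case 0
    then show ?case by simp
  next
    case (Suc j)
    have "matpow S (Suc j) *v 1 = S *v (matpow S j *v 1)"
      by (simp add: matrix_vector_mul_assoc)
    also have "\<dots> = complex_of_real (s^Suc j) *s 1"
      using Suc by (simp add: vector_scalar_commute S1)
    finally show ?case .
  qed
  have lower: "1 / s^m \<le> spec_norm \<Delta>" if hd: "det (mat 1 + M ** \<Delta>) = 0" for \<Delta>
  proof -
    obtain x where x0: "x \<noteq> 0" and hx: "(mat 1 + M ** \<Delta>) *v x = 0"
      using det_zero_iff[THEN iffD1, OF hd] by blast
    have "(mat 1 + M ** \<Delta>) *v x = x + M *v (\<Delta> *v x)"
      by (simp only: matrix_vector_mult_add_rdistrib matrix_vector_mul_assoc matrix_vector_mul_lid)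
    then have "x + M *v (\<Delta> *v x) = 0" using hx by simp
    then have "x = - (M *v (\<Delta> *v x))" by (rule add_eq_0_iff2[THEN iffD1])
    then have "norm x = norm (M *v (\<Delta> *v x))" by (metis norm_minus_cancel)
    also have "\<dots> \<le> s^m * norm (\<Delta> *v x)" unfolding M_def by (rule hM)
    also have "\<dots> \<le> s^m * (spec_norm \<Delta> * norm x)"
      unfolding spec_norm_def using s0
      by (intro mult_left_mono onorm) auto
    finally have "norm x \<le> (s^m * spec_norm \<Delta>) * norm x" by (simp only: mult.assoc)
    moreover have "norm x > 0" using x0 by simp
    ultimately have "1 \<le> s^m * spec_norm \<Delta>" by simp
    moreover have "s^m > 0" using s0 by simp
    ultimately show ?thesis by (simp add: divide_le_eq mult.commute)
  qed
  define c where "c = - complex_of_real (1 / s^m)"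
  define \<Delta>0 where "\<Delta>0 = (mat c :: ((complex, 'n) vec, 'n) vec)"
  have D0v: "\<Delta>0 *v v = c *s v" for v
    unfolding \<Delta>0_def by (simp add: vec_eq_iff matrix_vector_mult_def mat_def if_distrib[of "\<lambda>t. t * _"] cong: if_cong)
  have inB: "\<Delta>0 \<in> B"
  proof -
    obtain ks ns where B: "B = block_set ks ns" using assms(4) unfolding is_block_structure_def by blast
    show ?thesis unfolding B block_set_def Let_def \<Delta>0_def
      by (auto simp: mat_def intro!: exI[of _ "\<lambda>_. c"])
  qed
  have det0: "det (mat 1 + M ** \<Delta>0) = 0"
  proof -
    have "(mat 1 + M ** \<Delta>0) *v 1 = 1 + c *s (M *v 1)"
      by (simp add: matrix_vector_mult_add_rdistrib matrix_vector_mul_assoc[symmetric] D0v vector_scalar_commute)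
    also have "\<dots> = 0" unfolding M_def M1 c_def using s0
      by (simp add: vec_eq_iff)
    finally show ?thesis using det_zero_iff by (metis zero_neq_one)
  qed
  have nD0: "spec_norm \<Delta>0 \<le> 1 / s^m"
    unfolding spec_norm_def
  proof (rule onorm_le)
    fix x :: "(complex, 'n) vec"
    show "norm (\<Delta>0 *v x) \<le> 1 / s^m * norm x"
      using s0 by (simp add: D0v norm_smult_vec c_def norm_divide norm_power)
  qed
  have Inf: "Inf {spec_norm D | D. D \<in> B \<and> det (mat 1 + M ** D) = 0} = 1 / s^m"
  proof (rule cInf_eq_minimum)
    show "1 / s^m \<in> {spec_norm D | D. D \<in> B \<and> det (mat 1 + M ** D) = 0}"
      using inB det0 nD0 lower[OF det0] by (intro CollectI exI[of _ \<Delta>0]) auto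
  next
    fix y assume "y \<in> {spec_norm D | D. D \<in> B \<and> det (mat 1 + M ** D) = 0}"
    then show "1 / s^m \<le> y" using lower by auto
  qed
  have "ssv B M = s^m"
    unfolding ssv_def Inf using inB det0 s0 by auto
  then show ?thesis unfolding M_def S_def R_def s_def .
qed

end
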